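(* Let $m,n\geq 6$. Then $\phi(P_{m-5}\cup W_{n-1},x)=\phi(P_{n-5}\cup W_{m-1},x)$; that is, $P_{m-5}\cup W_{n-1}$ and $P_{n-5}\cup W_{m-1}$ are cospectral with respect to the adjacency matrix. Moreover $ME(P_{m-5}\cup W_{n-1})=ME(P_{n-5}\cup W_{m-1})$.
   Context: $P_t$ denotes the path with $t$ edges (vertices $v_1,\dots,v_{t+1}$). For $N\geq 5$, $W_N$ is the tree obtained from $P_{N-2}$ (vertices $v_1,\dots,v_{N-1}$) by attaching one new pendent vertex to $v_2$ and one new pendent vertex to $v_{N-2}$. $\cup$ denotes disjoint union. $\phi(G,x)$ is the characteristic polynomial of the adjacency matrix of the graph $G$. For a graph $G$ on $n'$ vertices with $m(G,k)$ the number of $k$-edge matchings ($m(G,0)=1$), the matching polynomial is $\varphi(G,x)=\sum_{k\geq0}(-1)^km(G,k)x^{n'-2k}$ and the matching energy $ME(G)$ is the sum of absolute values of all roots (with multiplicity) of $\varphi(G,x)$. *)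

theory Defs
  imports "Jordan_Normal_Form.Char_Poly" "HOL-Computational_Algebra.Fundamental_Theorem_Algebra"
begin

text \<open>A finite simple graph: a vertex set together with a set of 2-element edges.\<close>
type_synonym 'a graph = "'a set \<times> 'a set set"

definition verts :: "'a graph \<Rightarrow> 'a set" where "verts G = fst G"
definition edges :: "'a graph \<Rightarrow> 'a set set" where "edges G = snd G"

definition path_graph :: "nat \<Rightarrow> nat graph" where
  "path_graph t = ({1..t+1}, {{i, i+1} | i. 1 \<le> i \<and> i \<le> t})"

text \<open>W_N (N >= 5): path P_{N-2} on v_1..v_{N-1}, plus new vertex N adjacent to v_2
  and new vertex N+1 adjacent to v_{N-2}.\<close>
definition W_graph :: "nat \<Rightarrow> nat graph" where
  "W_graph N = ({1..N+1},
     {{i, i+1} | i. 1 \<le> i \<and> i \<le> N - 2} \<union> {{2, N}, {N - 2, N + 1}})"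

definition disj_union :: "'a graph \<Rightarrow> 'b graph \<Rightarrow> ('a + 'b) graph" where
  "disj_union G H = (Inl ` verts G \<union> Inr ` verts H,
      (\<lambda>e. Inl ` e) ` edges G \<union> (\<lambda>e. Inr ` e) ` edges H)"

definition vertex_list :: "'a graph \<Rightarrow> 'a list" where
  "vertex_list G = (SOME vs. distinct vs \<and> set vs = verts G)"

definition adj_matrix :: "'a graph \<Rightarrow> int mat" where
  "adj_matrix G = (let vs = vertex_list G in
     mat (length vs) (length vs) (\<lambda>(i,j). if {vs ! i, vs ! j} \<in> edges G then 1 else 0))"

definition char_poly_graph :: "'a graph \<Rightarrow> int poly" where
  "char_poly_graph G = char_poly (adj_matrix G)"

definition num_matchings :: "'a graph \<Rightarrow> nat \<Rightarrow> nat" where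
  "num_matchings G k = card {M. M \<subseteq> edges G \<and> card M = k \<and>
       (\<forall>e\<in>M. \<forall>f\<in>M. e \<noteq> f \<longrightarrow> e \<inter> f = {})}"

definition matching_poly :: "'a graph \<Rightarrow> int poly" where
  "matching_poly G = (\<Sum>k \<le> card (verts G) div 2.
      monom ((-1)^k * int (num_matchings G k)) (card (verts G) - 2*k))"

definition matching_energy :: "'a graph \<Rightarrow> real" where
  "matching_energy G = sum_mset (image_mset cmod (proots (map_poly of_int (matching_poly G) :: complex poly)))"

end

theory Submission
  imports Defs
begin

definition matchings :: "'a set \<Rightarrow> 'a set set \<Rightarrow> 'a set set set" where
 "matchings V E = {M. M \<subseteq> {e\<in>E. e \<subseteq> V \<and> card e = 2} \<and> (\<forall>e\<in>M. \<forall>f\<in>M. e \<noteq> f \<longrightarrow> e \<inter> f = {})}"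

definition Mt :: "'a set \<Rightarrow> 'a set set \<Rightarrow> int poly" where
 "Mt V E = (\<Sum>M\<in>matchings V E. (-1)^card M * [:0,1:]^(card V - 2*card M))"

abbreviation "X \<equiv> [:0,1::int:]"

lemma finite_matchings: "finite V \<Longrightarrow> finite (matchings V E)"
proof -
  assume "finite V"
  have "matchings V E \<subseteq> Pow (Pow V)" unfolding matchings_def by auto
  thus ?thesis using \<open>finite V\<close> finite_subset by blast
qed

lemma matching_card:
  assumes "finite V" "M \<in> matchings V E"
  shows "finite M" "2 * card M = card (\<Union>M)" "2 * card M \<le> card V"
proof -
  have sub: "M \<subseteq> Pow V" using assms(2) unfolding matchings_def by auto
  show fM: "finite M" using sub assms(1) finite_subset by blast
  have "disjoint M" using assms(2) unfolding matchings_def disjoint_def by auto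
  moreover have "\<And>A. A \<in> M \<Longrightarrow> finite A" using sub assms(1) finite_subset by blast
  ultimately have "card (\<Union>M) = sum card M" by (rule card_Union_disjoint)
  also have "\<dots> = sum (\<lambda>_. 2) M" using assms(2) unfolding matchings_def by (intro sum.cong) auto
  finally show "2 * card M = card (\<Union>M)" by simp
  moreover have "card (\<Union>M) \<le> card V" using sub assms(1) by (intro card_mono) auto
  ultimately show "2 * card M \<le> card V" by simp
qed

lemma Mt_isolated:
  assumes "finite V" "v \<in> V" "\<And>e. e \<in> E \<Longrightarrow> v \<in> e \<Longrightarrow> e \<subseteq> V \<Longrightarrow> card e = 2 \<Longrightarrow> False"
  shows "Mt V E = X * Mt (V - {v}) E"
proof -
  have eq: "matchings V E = matchings (V - {v}) E"
    unfolding matchings_def using assms(3) by blast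
  have "Mt V E = (\<Sum>M\<in>matchings (V-{v}) E. X * ((-1)^card M * X^(card (V-{v}) - 2*card M)))"
    unfolding Mt_def eq
  proof (intro sum.cong refl)
    fix M assume M: "M \<in> matchings (V - {v}) E"
    have "2 * card M \<le> card (V - {v})" using matching_card(3)[OF _ M] assms(1) by auto
    moreover have "card (V - {v}) = card V - 1" "card V \<ge> 1" using assms(1,2)
      by (auto simp: card_gt_0_iff Suc_le_eq)
    ultimately have "card V - 2 * card M = Suc (card (V-{v}) - 2 * card M)" by linarith
    thus "(-1)^card M * X^(card V - 2*card M) = X * ((-1)^card M * X^(card (V-{v}) - 2*card M))"
      by (simp add: algebra_simps)
  qed
  thus ?thesis unfolding Mt_def by (simp add: sum_distrib_left)
qed

lemma Mt_pendant:
  assumes "finite V" "v \<in> V" "u \<in> V" "u \<noteq> v" "{u,v} \<in> E"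
    and "\<And>e. e \<in> E \<Longrightarrow> v \<in> e \<Longrightarrow> e \<subseteq> V \<Longrightarrow> card e = 2 \<Longrightarrow> e = {u,v}"
  shows "Mt V E = X * Mt (V - {v}) E - Mt (V - {u,v}) E"
proof -
  let ?A = "matchings (V - {v}) E"
  let ?B = "insert {u,v} ` matchings (V - {u,v}) E"
  have cuv: "card {u,v} = 2" using assms(4) by auto
  have split: "matchings V E = ?A \<union> ?B"
  proof
    show "matchings V E \<subseteq> ?A \<union> ?B"
    proof
      fix M assume M: "M \<in> matchings V E"
      show "M \<in> ?A \<union> ?B"
      proof (cases "\<exists>e\<in>M. v \<in> e")
        case False
        then have "M \<in> ?A" using M unfolding matchings_def by auto
        thus ?thesis by simp
      next
        case True
        then obtain e where e: "e \<in> M" "v \<in> e" by blast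
        have "e = {u,v}" using e M assms(6) unfolding matchings_def by auto
        with e have uvM: "{u,v} \<in> M" by simp
        have M1: "M \<subseteq> {e\<in>E. e \<subseteq> V \<and> card e = 2}" 
          and M2: "\<forall>e\<in>M. \<forall>f\<in>M. e \<noteq> f \<longrightarrow> e \<inter> f = {}"
          using M unfolding matchings_def by auto
        have "\<forall>e\<in>M - {{u,v}}. e \<subseteq> V - {u,v}" 
        proof
          fix e assume "e \<in> M - {{u,v}}"
          then have "e \<subseteq> V" "e \<inter> {u,v} = {}" using M1 M2 uvM by auto
          thus "e \<subseteq> V - {u,v}" by blast
        qed
        hence "M - {{u,v}} \<in> matchings (V - {u,v}) E"
          using M1 M2 unfolding matchings_def by auto
        moreover have "M = insert {u,v} (M - {{u,v}})" using uvM by auto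
        ultimately show ?thesis by blast
      qed
    qed
  next
    show "?A \<union> ?B \<subseteq> matchings V E"
      using assms(3,2,5) cuv unfolding matchings_def by auto
  qed
  have disj: "?A \<inter> ?B = {}" unfolding matchings_def by auto
  have fA: "finite ?A" "finite (matchings (V - {u,v}) E)" using assms(1) finite_matchings by auto
  have inj: "inj_on (insert {u,v}) (matchings (V - {u,v}) E)"
  proof (rule inj_onI)
    fix M1 M2 assume "M1 \<in> matchings (V - {u,v}) E" "M2 \<in> matchings (V - {u,v}) E"
      "insert {u,v} M1 = insert {u,v} M2"
    moreover have "{u,v} \<notin> M1" "{u,v} \<notin> M2" using calculation(1,2) unfolding matchings_def by auto
    ultimately show "M1 = M2" by (metis insert_ident)
  qed
  define t where "t = (\<lambda>(W::'a set) (M::'a set set). (-1::int poly)^card M * X^(card W - 2*card M))"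
  have "Mt V E = sum (t V) ?A + sum (t V) ?B"
    unfolding Mt_def t_def split by (rule sum.union_disjoint) (use fA disj in auto)
  also have "sum (t V) ?A = X * Mt (V - {v}) E"
    unfolding Mt_def sum_distrib_left
  proof (intro sum.cong refl)
    fix M assume M: "M \<in> ?A"
    have "2 * card M \<le> card (V - {v})" using matching_card(3)[OF _ M] assms(1) by auto
    moreover have "card (V - {v}) = card V - 1" "card V \<ge> 1" using assms(1,2)
      by (auto simp: card_gt_0_iff Suc_le_eq)
    ultimately have "card V - 2 * card M = Suc (card (V-{v}) - 2 * card M)" by linarith
    thus "t V M = X * ((-1)^card M * X^(card (V-{v}) - 2*card M))"
      unfolding t_def by (simp add: algebra_simps)
  qed
  also have "sum (t V) ?B = sum (t V \<circ> insert {u,v}) (matchings (V - {u,v}) E)"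
    by (rule sum.reindex[OF inj])
  also have "\<dots> = - Mt (V - {u,v}) E"
    unfolding Mt_def sum_negf[symmetric]
  proof (intro sum.cong refl)
    fix M assume M: "M \<in> matchings (V - {u,v}) E"
    have fM: "finite M" using matching_card(1)[OF _ M] assms(1) by auto
    have nM: "{u,v} \<notin> M" using M unfolding matchings_def by auto
    have "2 * card M \<le> card (V - {u,v})" using matching_card(3)[OF _ M] assms(1) by auto
    moreover have "card (V - {u,v}) = card V - 2" "card V \<ge> 2" using assms(1,2,3,4)
      apply (simp add: card_Diff_subset)
      using assms(1,2,3,4) card_mono[OF assms(1), of "{u,v}"] by auto
    ultimately have "card V - 2 * card (insert {u,v} M) = card (V-{u,v}) - 2 * card M"
      using fM nM by simp
    thus "(t V \<circ> insert {u,v}) M = - ((-1)^card M * X^(card (V-{u,v}) - 2*card M))"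
      unfolding t_def using fM nM by simp
  qed
  finally show ?thesis by simp
qed

fun pp :: "nat \<Rightarrow> int poly" where
  "pp 0 = 1" | "pp (Suc 0) = X" | "pp (Suc (Suc k)) = X * pp (Suc k) - pp k"

lemma Mt_empty: "Mt {} E = 1"
proof -
  have "matchings {} E = {{}}" unfolding matchings_def by auto
  thus ?thesis unfolding Mt_def by simp
qed

lemma Mt_path:
  assumes "\<And>e. e \<in> E \<Longrightarrow> e \<subseteq> {a..<a+k} \<Longrightarrow> card e = 2 \<Longrightarrow> \<exists>i. e = {i, Suc i}"
      and "\<And>i. a \<le> i \<Longrightarrow> Suc i < a+k \<Longrightarrow> {i, Suc i} \<in> E"
  shows "Mt {a..<a+k} E = pp k"
  using assms
proof (induction k rule: pp.induct)
  case 1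
  then show ?case by (simp add: Mt_empty)
next
  case 2
  have "Mt {a..<a+Suc 0} E = X * Mt ({a..<a+Suc 0} - {a}) E"
    by (rule Mt_isolated) (auto simp: card_2_iff)
  then show ?case by (simp add: Mt_empty)
next
  case (3 k)
  let ?V = "{a..<a + Suc (Suc k)}"
  have "Mt ?V E = X * Mt (?V - {a+Suc k}) E - Mt (?V - {a+k, a+Suc k}) E"
  proof (rule Mt_pendant)
    show "{a+k, a+Suc k} \<in> E" using 3(4)[of "a+k"] by simp
    fix e assume e: "e \<in> E" "a + Suc k \<in> e" "e \<subseteq> ?V" "card e = 2"
    then obtain i where i: "e = {i, Suc i}" using 3(3) by blast
    show "e = {a+k, a+Suc k}" using e(2,3) unfolding i by auto
  qed auto
  moreover have "?V - {a+Suc k} = {a..<a + Suc k}" by auto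
  moreover have "?V - {a+k, a+Suc k} = {a..<a + k}" by auto
  moreover have "Mt {a..<a + Suc k} E = pp (Suc k)"
  proof (rule 3(1))
    fix e assume "e \<in> E" "e \<subseteq> {a..<a + Suc k}" "card e = 2"
    moreover have "e \<subseteq> ?V" using calculation(2) by auto
    ultimately show "\<exists>i. e = {i, Suc i}" using 3(3) by blast
  next
    fix i assume "a \<le> i" "Suc i < a + Suc k" then show "{i, Suc i} \<in> E" using 3(4) by simp
  qed
  moreover have "Mt {a..<a + k} E = pp k"
  proof (rule 3(2))
    fix e assume "e \<in> E" "e \<subseteq> {a..<a + k}" "card e = 2"
    moreover have "e \<subseteq> ?V" using calculation(2) by auto
    ultimately show "\<exists>i. e = {i, Suc i}" using 3(3) by blast
  next
    fix i assume "a \<le> i" "Suc i < a + k" then show "{i, Suc i} \<in> E" using 3(4) by simp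
  qed
  ultimately show ?case by simp
qed

lemma Mt_union:
  assumes fin: "finite V1" "finite V2" and dj: "V1 \<inter> V2 = {}"
    and cross: "\<And>e. e \<in> E \<Longrightarrow> e \<subseteq> V1 \<union> V2 \<Longrightarrow> card e = 2 \<Longrightarrow> e \<subseteq> V1 \<or> e \<subseteq> V2"
  shows "Mt (V1 \<union> V2) E = Mt V1 E * Mt V2 E"
proof -
  define t where "t = (\<lambda>(W::'a set) (M::'a set set). (-1::int poly)^card M * X^(card W - 2*card M))"
  have "Mt V1 E * Mt V2 E = (\<Sum>M1\<in>matchings V1 E. \<Sum>M2\<in>matchings V2 E. t V1 M1 * t V2 M2)"
    unfolding Mt_def t_def by (simp add: sum_product)
  also have "\<dots> = (\<Sum>(M1,M2)\<in>matchings V1 E \<times> matchings V2 E. t V1 M1 * t V2 M2)"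
    by (rule sum.cartesian_product)
  also have "\<dots> = (\<Sum>M\<in>matchings (V1 \<union> V2) E. t (V1 \<union> V2) M)"
  proof (rule sum.reindex_bij_witness[where i = "\<lambda>M. ({e\<in>M. e \<subseteq> V1}, {e\<in>M. e \<subseteq> V2})"
        and j = "\<lambda>(M1,M2). M1 \<union> M2"])
    fix M assume M: "M \<in> matchings (V1 \<union> V2) E"
    have "\<forall>e\<in>M. e \<subseteq> V1 \<or> e \<subseteq> V2" using M cross unfolding matchings_def by auto
    then show "(case ({e\<in>M. e \<subseteq> V1}, {e\<in>M. e \<subseteq> V2}) of (M1, M2) \<Rightarrow> M1 \<union> M2) = M" by auto
    show "({e\<in>M. e \<subseteq> V1}, {e\<in>M. e \<subseteq> V2}) \<in> matchings V1 E \<times> matchings V2 E"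
      using M unfolding matchings_def by auto
  next
    fix P assume P: "P \<in> matchings V1 E \<times> matchings V2 E"
    obtain M1 M2 where P': "P = (M1,M2)" by (cases P)
    have M1: "M1 \<in> matchings V1 E" and M2: "M2 \<in> matchings V2 E" using P P' by auto
    have ne1: "\<forall>e\<in>M1. e \<noteq> {} \<and> e \<subseteq> V1" using M1 unfolding matchings_def by auto
    have ne2: "\<forall>e\<in>M2. e \<noteq> {} \<and> e \<subseteq> V2" using M2 unfolding matchings_def by auto
    have a: "{e\<in>M1 \<union> M2. e \<subseteq> V1} = M1" using ne1 ne2 dj by blast
    have b: "{e\<in>M1 \<union> M2. e \<subseteq> V2} = M2" using ne1 ne2 dj by blast
    show "({e\<in>(case P of (M1, M2) \<Rightarrow> M1 \<union> M2). e \<subseteq> V1}, {e\<in>(case P of (M1, M2) \<Rightarrow> M1 \<union> M2). e \<subseteq> V2}) = P"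
      using a b P' by simp
    have dd: "\<forall>e\<in>M1. \<forall>f\<in>M2. e \<inter> f = {}" using ne1 ne2 dj by blast
    have d1: "\<forall>e\<in>M1. \<forall>f\<in>M1. e \<noteq> f \<longrightarrow> e \<inter> f = {}" and s1: "M1 \<subseteq> {e\<in>E. e \<subseteq> V1 \<and> card e = 2}"
      using M1 unfolding matchings_def by auto
    have d2: "\<forall>e\<in>M2. \<forall>f\<in>M2. e \<noteq> f \<longrightarrow> e \<inter> f = {}" and s2: "M2 \<subseteq> {e\<in>E. e \<subseteq> V2 \<and> card e = 2}"
      using M2 unfolding matchings_def by auto
    have d12: "\<forall>e\<in>M1 \<union> M2. \<forall>f\<in>M1 \<union> M2. e \<noteq> f \<longrightarrow> e \<inter> f = {}"
    proof (intro ballI impI)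
      fix e f assume "e \<in> M1 \<union> M2" "f \<in> M1 \<union> M2" "e \<noteq> f"
      then show "e \<inter> f = {}" using d1 d2 dd by (metis Int_commute UnE)
    qed
    have s12: "M1 \<union> M2 \<subseteq> {e\<in>E. e \<subseteq> V1 \<union> V2 \<and> card e = 2}" using s1 s2 by blast
    show "(case P of (M1, M2) \<Rightarrow> M1 \<union> M2) \<in> matchings (V1 \<union> V2) E"
      using d12 s12 unfolding P' matchings_def by simp
    have f1: "finite M1" "2 * card M1 \<le> card V1" using matching_card[OF fin(1) M1] by auto
    have f2: "finite M2" "2 * card M2 \<le> card V2" using matching_card[OF fin(2) M2] by auto
    have cM: "card (M1 \<union> M2) = card M1 + card M2"
    proof (rule card_Un_disjoint)
      show "M1 \<inter> M2 = {}"
      proof (intro equals0I)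
        fix x assume "x \<in> M1 \<inter> M2"
        then have "x \<noteq> {}" "x \<subseteq> V1" "x \<subseteq> V2" using ne1 ne2 by auto
        then show False using dj by blast
      qed
    qed (use f1 f2 in auto)
    have cV: "card (V1 \<union> V2) = card V1 + card V2" by (rule card_Un_disjoint) (use fin dj in auto)
    have ex: "card (V1 \<union> V2) - 2 * card (M1 \<union> M2) = (card V1 - 2*card M1) + (card V2 - 2 * card M2)"
      using cM cV f1 f2 by simp
    show "t (V1 \<union> V2) (case P of (M1, M2) \<Rightarrow> M1 \<union> M2) = (case P of (M1, M2) \<Rightarrow> t V1 M1 * t V2 M2)"
      unfolding P' t_def using cM ex by (simp add: power_add algebra_simps)
  qed
  finally show ?thesis unfolding Mt_def t_def by simp
qed

lemma Mt_iso:
  assumes inj: "inj_on f S" and fin: "finite S"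
    and ed: "\<And>e. e \<subseteq> S \<Longrightarrow> card e = 2 \<Longrightarrow> (f ` e \<in> E \<longleftrightarrow> e \<in> E')"
  shows "Mt (f ` S) E = Mt S E'"
proof -
  have cS: "card (f ` S) = card S" using card_image[OF inj] .
  have ce: "card (f ` e) = card e" if "e \<subseteq> S" for e using card_image inj inj_on_subset that by metis
  show ?thesis unfolding Mt_def cS
  proof (rule sym, rule sum.reindex_bij_witness[where i = "\<lambda>M. (\<lambda>e. S \<inter> f -` e) ` M" and j = "\<lambda>M. (`) f ` M"])
    fix M assume M: "M \<in> matchings S E'"
    have sub: "\<forall>e\<in>M. e \<subseteq> S" using M unfolding matchings_def by auto
    have "\<forall>e\<in>M. S \<inter> f -` (f ` e) = e" using sub inj unfolding inj_on_def by blast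
    then show "(\<lambda>e. S \<inter> f -` e) ` (`) f ` M = M" by (simp add: image_image)
    have "\<forall>e\<in>M. f ` e \<in> E \<and> f ` e \<subseteq> f ` S \<and> card (f ` e) = 2"
    proof
      fix e assume e: "e \<in> M"
      have "e \<subseteq> S" "card e = 2" "e \<in> E'" using e M unfolding matchings_def by auto
      then show "f ` e \<in> E \<and> f ` e \<subseteq> f ` S \<and> card (f ` e) = 2" using ed ce by auto
    qed
    moreover have "\<forall>e\<in>M. \<forall>e'\<in>M. f ` e \<noteq> f ` e' \<longrightarrow> f ` e \<inter> f ` e' = {}"
    proof (intro ballI impI)
      fix e e' assume ee: "e \<in> M" "e' \<in> M" "f ` e \<noteq> f ` e'"
      then have "e \<noteq> e'" by auto
      then have "e \<inter> e' = {}" using M ee unfolding matchings_def by auto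
      then show "f ` e \<inter> f ` e' = {}" using inj sub ee(1,2) unfolding inj_on_def by blast
    qed
    ultimately show "(`) f ` M \<in> matchings (f ` S) E" unfolding matchings_def by auto
    have "inj_on ((`) f) M" using inj_on_image_Pow[OF inj] sub by (meson PowI inj_on_subset subsetI)
    then show "(-1) ^ card ((`) f ` M) * X ^ (card S - 2 * card ((`) f ` M)) =
       (-1) ^ card M * X ^ (card S - 2 * card M)" by (simp add: card_image)
  next
    fix M assume M: "M \<in> matchings (f ` S) E"
    have sub: "\<forall>e\<in>M. e \<subseteq> f ` S" using M unfolding matchings_def by auto
    have "\<forall>e\<in>M. f ` (S \<inter> f -` e) = e" using sub by blast
    then show "(`) f ` (\<lambda>e. S \<inter> f -` e) ` M = M" by (simp add: image_image)
    have "\<forall>e\<in>M. S \<inter> f -` e \<in> E' \<and> S \<inter> f -` e \<subseteq> S \<and> card (S \<inter> f -` e) = 2"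
    proof
      fix e assume e: "e \<in> M"
      have im: "f ` (S \<inter> f -` e) = e" using sub e by blast
      have c: "card (S \<inter> f -` e) = 2" using ce[of "S \<inter> f -` e"] im e M unfolding matchings_def by auto
      have "e \<in> E" using e M unfolding matchings_def by auto
      then show "S \<inter> f -` e \<in> E' \<and> S \<inter> f -` e \<subseteq> S \<and> card (S \<inter> f -` e) = 2"
        using ed[of "S \<inter> f -` e"] im c by auto
    qed
    moreover have "\<forall>e\<in>M. \<forall>e'\<in>M. S \<inter> f -` e \<noteq> S \<inter> f -` e' \<longrightarrow> (S \<inter> f -` e) \<inter> (S \<inter> f -` e') = {}"
      using M unfolding matchings_def by blast
    ultimately show "(\<lambda>e. S \<inter> f -` e) ` M \<in> matchings S E'" unfolding matchings_def by auto
  qed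
qed

lemma ring_aux:
  fixes a b c d e x :: "'a::comm_ring_1"
  assumes "a = x * b - c" "b = x * c - d" "c = x * d - e"
  shows "a - 2 * c + e = (x^2 - 4) * c"
proof -
  have e: "e = x * d - c" using assms(3) by simp
  show ?thesis unfolding assms(1) assms(2) e by (simp add: algebra_simps power2_eq_square)
qed

lemma pp_id: "pp (k+4) - 2 * pp (k+2) + pp k = (X^2 - 4) * pp (k+2)"
proof (rule ring_aux)
  have "k+4 = Suc (Suc (k+2))" "k+3 = Suc (k+2)" by simp_all
  then show "pp (k+4) = X * pp (k+3) - pp (k+2)" by (simp only: pp.simps)
  have "k+3 = Suc (Suc (k+1))" "k+2 = Suc (k+1)" by simp_all
  then show "pp (k+3) = X * pp (k+2) - pp (k+1)" by (simp only: pp.simps)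
  have "k+2 = Suc (Suc k)" "k+1 = Suc k" by simp_all
  then show "pp (k+2) = X * pp (k+1) - pp k" by (simp only: pp.simps)
qed

lemma Mt_path_graph: "Mt (verts (path_graph t)) (edges (path_graph t)) = pp (t+1)"
proof -
  have "verts (path_graph t) = {1..<1+(t+1)}" unfolding verts_def path_graph_def by auto
  moreover have "Mt {1..<1+(t+1)} (edges (path_graph t)) = pp (t+1)"
    by (rule Mt_path) (auto simp: edges_def path_graph_def)
  ultimately show ?thesis by simp
qed

lemma Mt_W_graph:
  assumes "N = k + 5"
  shows "Mt (verts (W_graph N)) (edges (W_graph N)) = X^2 * ((X^2 - 4) * pp (k+2))"
proof -
  define E where "E = edges (W_graph N)"
  have E: "E = {{i, i+1} | i. 1 \<le> i \<and> i \<le> k+3} \<union> {{2, k+5}, {k+3, k+6}}"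
    unfolding E_def edges_def W_graph_def assms by (simp add: add.commute)
  have V: "verts (W_graph N) = {1..k+6}" unfolding verts_def W_graph_def assms by simp
  have s0: "Mt {1..k+6} E = X * Mt ({1..k+6} - {k+6}) E - Mt ({1..k+6} - {k+3,k+6}) E"
  proof (rule Mt_pendant)
    fix e assume e: "e \<in> E" "k+6 \<in> e" "e \<subseteq> {1..k+6}" "card e = 2"
    show "e = {k+3, k+6}" using e(1,2) unfolding E by auto
  qed (auto simp: E)
  have e1: "{1..k+6} - {k+6} = {1..k+5}" by auto
  have s1: "Mt {1..k+5} E = X * Mt ({1..k+5} - {k+5}) E - Mt ({1..k+5} - {2,k+5}) E"
  proof (rule Mt_pendant)
    fix e assume e: "e \<in> E" "k+5 \<in> e" "e \<subseteq> {1..k+5}" "card e = 2"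
    show "e = {2, k+5}" using e(1,2,3) unfolding E by auto
  qed (auto simp: E)
  have p3: "Mt ({1..k+5} - {k+5}) E = pp (k+4)"
  proof -
    have "{1..k+5} - {k+5} = {1..<1+(k+4)}" by auto
    moreover have "Mt {1..<1+(k+4)} E = pp (k+4)"
      by (rule Mt_path) (auto simp: E)
    ultimately show ?thesis by simp
  qed
  have s4: "Mt ({1..k+5} - {2,k+5}) E = X * Mt ({1..k+5} - {2,k+5} - {1}) E"
    by (rule Mt_isolated) (auto simp: E)
  have p4: "Mt ({1..k+5} - {2,k+5} - {1}) E = pp (k+2)"
  proof -
    have "{1..k+5} - {2,k+5} - {1} = {3..<3+(k+2)}" by auto
    moreover have "Mt {3..<3+(k+2)} E = pp (k+2)"
      by (rule Mt_path) (auto simp: E)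
    ultimately show ?thesis by simp
  qed
  have s2: "Mt ({1..k+6} - {k+3,k+6}) E = X * Mt ({1..k+6} - {k+3,k+6} - {k+4}) E"
    by (rule Mt_isolated) (auto simp: E)
  have s5: "Mt ({1..k+6} - {k+3,k+6} - {k+4}) E =
      X * Mt ({1..k+6} - {k+3,k+6} - {k+4} - {k+5}) E - Mt ({1..k+6} - {k+3,k+6} - {k+4} - {2,k+5}) E"
  proof (rule Mt_pendant)
    fix e assume e: "e \<in> E" "k+5 \<in> e" "e \<subseteq> {1..k+6} - {k+3,k+6} - {k+4}" "card e = 2"
    show "e = {2, k+5}" using e(1,2,3) unfolding E by auto
  qed (auto simp: E)
  have p6: "Mt ({1..k+6} - {k+3,k+6} - {k+4} - {k+5}) E = pp (k+2)"
  proof -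
    have "{1..k+6} - {k+3,k+6} - {k+4} - {k+5} = {1..<1+(k+2)}" by auto
    moreover have "Mt {1..<1+(k+2)} E = pp (k+2)"
      by (rule Mt_path) (auto simp: E)
    ultimately show ?thesis by simp
  qed
  have s7: "Mt ({1..k+6} - {k+3,k+6} - {k+4} - {2,k+5}) E =
      X * Mt ({1..k+6} - {k+3,k+6} - {k+4} - {2,k+5} - {1}) E"
    by (rule Mt_isolated) (auto simp: E)
  have p7: "Mt ({1..k+6} - {k+3,k+6} - {k+4} - {2,k+5} - {1}) E = pp k"
  proof -
    have "{1..k+6} - {k+3,k+6} - {k+4} - {2,k+5} - {1} = {3..<3+k}" by auto
    moreover have "Mt {3..<3+k} E = pp k"
      by (rule Mt_path) (auto simp: E)
    ultimately show ?thesis by simp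
  qed
  have "Mt {1..k+6} E = X * (X * pp (k+4) - X * pp (k+2)) - X * (X * pp (k+2) - X * pp k)"
    using s0 e1 s1 p3 s4 p4 s2 s5 p6 s7 p7 by simp
  also have "\<dots> = X^2 * (pp (k+4) - 2 * pp (k+2) + pp k)" by (simp add: algebra_simps power2_eq_square)
  finally show ?thesis using pp_id V E_def by simp
qed

definition swapM :: "'a set set \<Rightarrow> 'a \<Rightarrow> 'a" where
  "swapM M x = (if \<exists>e\<in>M. x \<in> e then (THE y. {x,y} \<in> M) else x)"

definition is_matching :: "'a set set \<Rightarrow> bool" where
  "is_matching M = ((\<forall>e\<in>M. card e = 2) \<and> (\<forall>e\<in>M. \<forall>f\<in>M. e \<noteq> f \<longrightarrow> e \<inter> f = {}))"

lemma matchings_is_matching: "M \<in> matchings V E \<Longrightarrow> is_matching M"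
  unfolding matchings_def is_matching_def by auto

lemma swapM_edge:
  assumes "is_matching M" "{a,b} \<in> M" "a \<noteq> b"
  shows "swapM M a = b"
proof -
  have "(THE y. {a,y} \<in> M) = b"
  proof (rule the_equality)
    show "{a,b} \<in> M" by fact
    fix y assume y: "{a,y} \<in> M"
    have dj: "\<forall>e\<in>M. \<forall>f\<in>M. e \<noteq> f \<longrightarrow> e \<inter> f = {}" and c2: "\<forall>e\<in>M. card e = 2"
      using assms(1) unfolding is_matching_def by auto
    have "{a,y} \<inter> {a,b} \<noteq> {}" by auto
    then have "{a,y} = {a,b}" using dj y assms(2) by metis
    moreover have "card {a,y} = 2" using c2 y by blast
    then have "y \<noteq> a" by (cases "y = a") auto
    ultimately show "y = b" by blast
  qed
  moreover have "\<exists>e\<in>M. a \<in> e" using assms(2) by blast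
  ultimately show ?thesis unfolding swapM_def by (simp only: if_True)
qed

lemma swapM_out: "x \<notin> \<Union>M \<Longrightarrow> swapM M x = x"
  unfolding swapM_def by auto

lemma matching_elem:
  assumes "is_matching M" "e \<in> M" "x \<in> e"
  obtains y where "e = {x,y}" "x \<noteq> y"
proof -
  have "card e = 2" using assms unfolding is_matching_def by auto
  then obtain a b where "e = {a,b}" "a \<noteq> b" by (meson card_2_iff)
  then show ?thesis using that assms(3) by (metis insert_commute insertE singletonD)
qed

lemma swapM_in:
  assumes "is_matching M" "e \<in> M" "x \<in> e"
  shows "swapM M x \<noteq> x" "e = {x, swapM M x}"
proof -
  obtain y where y: "e = {x,y}" "x \<noteq> y" using matching_elem[OF assms] .
  have "swapM M x = y" using swapM_edge[OF assms(1)] y assms(2) by blast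
  then show "swapM M x \<noteq> x" "e = {x, swapM M x}" using y by auto
qed

lemma swapM_invol:
  assumes "is_matching M"
  shows "swapM M (swapM M x) = x"
proof (cases "x \<in> \<Union>M")
  case True
  then obtain e where e: "e \<in> M" "x \<in> e" by blast
  have s: "swapM M x \<noteq> x" "e = {x, swapM M x}" using swapM_in[OF assms e] by auto
  have "{swapM M x, x} \<in> M" using s e by (simp add: insert_commute)
  then show ?thesis using swapM_edge[OF assms] s by auto
next
  case False
  then show ?thesis using swapM_out by metis
qed

lemma swapM_permutes:
  assumes "is_matching M" "\<Union>M \<subseteq> S"
  shows "swapM M permutes S"
proof (rule bij_imp_permutes)
  have im: "swapM M x \<in> S" if "x \<in> S" for x
  proof (cases "x \<in> \<Union>M")
    case True
    then obtain e where e: "e \<in> M" "x \<in> e" by blast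
    then show ?thesis using swapM_in(2)[OF assms(1) e] assms(2) by blast
  next
    case False then show ?thesis using swapM_out that by metis
  qed
  show "bij_betw (swapM M) S S"
  proof (rule bij_betw_byWitness[where f' = "swapM M"])
    show "\<forall>a\<in>S. swapM M (swapM M a) = a" using swapM_invol[OF assms(1)] by blast
    show "\<forall>a\<in>S. swapM M (swapM M a) = a" using swapM_invol[OF assms(1)] by blast
    show "swapM M ` S \<subseteq> S" using im by blast
    show "swapM M ` S \<subseteq> S" using im by blast
  qed
  show "swapM M x = x" if "x \<notin> S" for x
  proof -
    have "x \<notin> \<Union>M" using assms(2) that by blast
    then show ?thesis by (rule swapM_out)
  qed
qed

lemma swapM_insert:
  assumes "is_matching (insert {a,b} M)" "{a,b} \<notin> M" "a \<noteq> b"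
  shows "swapM (insert {a,b} M) = Transposition.transpose a b \<circ> swapM M"
proof
  fix x
  have mM: "is_matching M" using assms(1) unfolding is_matching_def by auto
  have djj: "\<forall>e\<in>M. {a,b} \<inter> e = {}"
  proof
    fix e assume "e \<in> M"
    moreover have "\<forall>e\<in>insert {a,b} M. \<forall>f\<in>insert {a,b} M. e \<noteq> f \<longrightarrow> e \<inter> f = {}"
      using assms(1) unfolding is_matching_def by simp
    ultimately show "{a,b} \<inter> e = {}" using assms(2) by (metis insertCI)
  qed
  have dj: "a \<notin> \<Union>M" "b \<notin> \<Union>M" using djj by auto
  show "swapM (insert {a, b} M) x = (Transposition.transpose a b \<circ> swapM M) x"
  proof (cases "x \<in> \<Union>M")
    case True
    then obtain e where e: "e \<in> M" "x \<in> e" by blast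
    have s: "swapM M x \<noteq> x" "e = {x, swapM M x}" using swapM_in[OF mM e] by auto
    have s2: "swapM (insert {a,b} M) x = swapM M x"
      using swapM_edge[OF assms(1), of x "swapM M x"] s e by auto
    have "swapM M x \<in> \<Union>M" using s e by blast
    then have "swapM M x \<noteq> a" "swapM M x \<noteq> b" using dj by auto
    then show ?thesis using s2 by (simp add: transpose_def)
  next
    case False
    then have o: "swapM M x = x" using swapM_out by metis
    show ?thesis
    proof (cases "x = a \<or> x = b")
      case True
      then show ?thesis using swapM_edge[OF assms(1), of a b] swapM_edge[OF assms(1), of b a] assms(3) o
        by (auto simp: insert_commute transpose_def)
    next
      case False
      then have "x \<notin> \<Union>(insert {a,b} M)" using \<open>x \<notin> \<Union>M\<close> by auto
      then show ?thesis using o False swapM_out by (metis comp_apply transpose_apply_other)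
    qed
  qed
qed

lemma swapM_sign:
  assumes "finite M" "is_matching M"
  shows "permutation (swapM M) \<and> sign (swapM M) = (-1) ^ card M"
  using assms
proof (induction M rule: finite_induct)
  case empty
  have eq0: "swapM {} = id" unfolding swapM_def by auto
  show ?case unfolding eq0 by (simp add: permutation_id)
next
  case (insert e M)
  have "card e = 2" using insert(4) unfolding is_matching_def by simp
  then obtain a b where ab: "e = {a,b}" "a \<noteq> b" unfolding card_2_iff by blast
  have mM: "is_matching M" using insert(4) unfolding is_matching_def by auto
  have IH: "permutation (swapM M)" "sign (swapM M) = (-1) ^ card M" using insert(3)[OF mM] by auto
  have eq: "swapM (insert e M) = Transposition.transpose a b \<circ> swapM M"
    using swapM_insert[of a b M] insert(2,4) ab by auto
  have pt: "permutation (Transposition.transpose a b)" by (simp add: permutation_swap_id)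
  have cI: "card (insert e M) = Suc (card M)" using insert(1,2) by simp
  show ?case unfolding eq cI
  proof
    show "permutation (Transposition.transpose a b \<circ> swapM M)" by (rule permutation_compose[OF pt IH(1)])
    have "sign (Transposition.transpose a b \<circ> swapM M) = sign (Transposition.transpose a b) * sign (swapM M)"
      by (rule sign_compose[OF pt IH(1)])
    also have "\<dots> = (-1)^Suc (card M)" using IH(2) ab(2) by (simp add: sign_swap_id)
    finally show "sign (Transposition.transpose a b \<circ> swapM M) = (-1)^Suc (card M)" .
  qed
qed

lemma forest_invol:
  fixes p :: "'a \<Rightarrow> 'a" and r :: "'a \<Rightarrow> nat"
  assumes fin: "finite S" and perm: "p permutes S"
    and good: "\<And>i. i \<in> S \<Longrightarrow> p i \<noteq> i \<Longrightarrow> {i, p i} \<in> E"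
    and rank1: "\<And>u v. u \<in> S \<Longrightarrow> v \<in> S \<Longrightarrow> u \<noteq> v \<Longrightarrow> {u,v} \<in> E \<Longrightarrow> r u \<noteq> r v"
    and rank2: "\<And>v a b. v \<in> S \<Longrightarrow> a \<in> S \<Longrightarrow> b \<in> S \<Longrightarrow> a \<noteq> v \<Longrightarrow> b \<noteq> v \<Longrightarrow> {v,a} \<in> E \<Longrightarrow> {v,b} \<in> E
        \<Longrightarrow> r a < r v \<Longrightarrow> r b < r v \<Longrightarrow> a = b"
  shows "p (p v) = v"
proof (rule ccontr)
  assume ne: "p (p v) \<noteq> v"
  have injp: "inj p" using perm permutes_inj by blast
  have vS: "v \<in> S" using ne perm by (metis permutes_not_in)
  have pS: "p x \<in> S" if "x \<in> S" for x using perm that by (simp add: permutes_in_image)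
  define Orb where "Orb = range (\<lambda>k. (p ^^ k) v)"
  have OS: "Orb \<subseteq> S"
  proof
    fix x assume "x \<in> Orb"
    then obtain k where "x = (p ^^ k) v" unfolding Orb_def by blast
    moreover have "(p ^^ k) v \<in> S" by (induction k) (use vS pS in auto)
    ultimately show "x \<in> S" by simp
  qed
  have finO: "finite Orb" using OS fin finite_subset by blast
  have pO: "p ` Orb \<subseteq> Orb"
  proof
    fix y assume "y \<in> p ` Orb"
    then obtain k where "y = p ((p ^^ k) v)" unfolding Orb_def by blast
    then have "y = (p ^^ Suc k) v" by simp
    then show "y \<in> Orb" unfolding Orb_def by blast
  qed
  have surjO: "p ` Orb = Orb" by (rule endo_inj_surj[OF finO pO]) (use injp inj_on_subset in blast)
  have neO: "Orb \<noteq> {}" unfolding Orb_def by blast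
  obtain w where wO: "w \<in> Orb" and wmax: "\<And>y. y \<in> Orb \<Longrightarrow> r y \<le> r w"
  proof -
    have "Max (r ` Orb) \<in> r ` Orb" using finO neO by simp
    then obtain w where "w \<in> Orb" "r w = Max (r ` Orb)" by auto
    moreover have "\<And>y. y \<in> Orb \<Longrightarrow> r y \<le> Max (r ` Orb)" using finO by simp
    ultimately show ?thesis using that by metis
  qed
  obtain k where wk: "w = (p ^^ k) v" using wO unfolding Orb_def by blast
  have injk: "inj (p ^^ k)" using inj_fn[OF injp] .
  have c1: "p w \<noteq> w"
  proof
    assume "p w = w"
    then have "(p ^^ k) (p v) = (p ^^ k) v" unfolding wk by (simp add: funpow_swap1)
    then have "p v = v" using injk by (meson injD)
    then show False using ne by simp
  qed
  have c2: "p (p w) \<noteq> w"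
  proof
    assume "p (p w) = w"
    then have "(p ^^ k) (p (p v)) = (p ^^ k) v" unfolding wk by (simp add: funpow_swap1)
    then have "p (p v) = v" using injk by (meson injD)
    then show False using ne by simp
  qed
  obtain u where uO: "u \<in> Orb" and pu: "p u = w" using wO surjO by (metis imageE)
  have uw: "u \<noteq> w" using c1 pu by auto
  have pwu: "p w \<noteq> u" using c2 pu by auto
  have pwO: "p w \<in> Orb" using pO wO by blast
  have wS: "w \<in> S" and uS: "u \<in> S" and pwS: "p w \<in> S" using OS wO uO pwO by auto
  have e1: "{w, p w} \<in> E" using good[OF wS c1] .
  have e2: "{w, u} \<in> E" using good[OF uS] pu uw by (metis insert_commute)
  have r1: "r (p w) < r w" using wmax[OF pwO] rank1[OF wS pwS c1[symmetric] e1] by linarith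
  have r2: "r u < r w" using wmax[OF uO] rank1[OF wS uS uw[symmetric] e2] by linarith
  have "p w = u" by (rule rank2[OF wS pwS uS c1 uw e1 e2 r1 r2])
  then show False using pwu by simp
qed

lemma swapM_recover:
  assumes "M \<in> matchings S E"
  shows "{{i, swapM M i} | i. i \<in> S \<and> swapM M i \<noteq> i} = M"
proof -
  have mM: "is_matching M" using assms by (rule matchings_is_matching)
  have sub: "\<forall>e\<in>M. e \<subseteq> S \<and> card e = 2" using assms unfolding matchings_def by auto
  show ?thesis
  proof
    show "{{i, swapM M i} | i. i \<in> S \<and> swapM M i \<noteq> i} \<subseteq> M"
    proof
      fix e assume "e \<in> {{i, swapM M i} | i. i \<in> S \<and> swapM M i \<noteq> i}"
      then obtain i where i: "e = {i, swapM M i}" "i \<in> S" "swapM M i \<noteq> i" by blast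
      have "i \<in> \<Union>M" using i(3) swapM_out by metis
      then obtain f where f: "f \<in> M" "i \<in> f" by blast
      have "f = {i, swapM M i}" using swapM_in(2)[OF mM f] .
      then show "e \<in> M" using f i by simp
    qed
  next
    show "M \<subseteq> {{i, swapM M i} | i. i \<in> S \<and> swapM M i \<noteq> i}"
    proof
      fix e assume e: "e \<in> M"
      have "card e = 2" using sub e by auto
      then obtain x where x: "x \<in> e" by (metis card.empty ex_in_conv zero_neq_numeral)
      have "e = {x, swapM M x}" "swapM M x \<noteq> x" using swapM_in[OF mM e x] by auto
      moreover have "x \<in> S" using sub e x by blast
      ultimately show "e \<in> {{i, swapM M i} | i. i \<in> S \<and> swapM M i \<noteq> i}" by blast
    qed
  qed
qed

lemma swapM_inj: "inj_on swapM (matchings S E)"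
proof (rule inj_onI)
  fix M1 M2 assume a: "M1 \<in> matchings S E" "M2 \<in> matchings S E" "swapM M1 = swapM M2"
  have "M1 = {{i, swapM M1 i} | i. i \<in> S \<and> swapM M1 i \<noteq> i}" using swapM_recover[OF a(1)] by simp
  also have "\<dots> = {{i, swapM M2 i} | i. i \<in> S \<and> swapM M2 i \<noteq> i}" using a(3) by simp
  also have "\<dots> = M2" using swapM_recover[OF a(2)] by simp
  finally show "M1 = M2" .
qed

lemma det_forest:
  fixes E :: "nat set set" and r :: "nat \<Rightarrow> nat"
  assumes rank1: "\<And>u v. u \<in> {0..<n} \<Longrightarrow> v \<in> {0..<n} \<Longrightarrow> u \<noteq> v \<Longrightarrow> {u,v} \<in> E \<Longrightarrow> r u \<noteq> r v"
    and rank2: "\<And>v a b. v \<in> {0..<n} \<Longrightarrow> a \<in> {0..<n} \<Longrightarrow> b \<in> {0..<n} \<Longrightarrow> a \<noteq> v \<Longrightarrow> b \<noteq> v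
        \<Longrightarrow> {v,a} \<in> E \<Longrightarrow> {v,b} \<in> E \<Longrightarrow> r a < r v \<Longrightarrow> r b < r v \<Longrightarrow> a = b"
  shows "det (mat n n (\<lambda>(i,j). if i = j then X else if {i,j} \<in> E then -1 else 0)) = Mt {0..<n} E"
proof -
  define S where "S = {0..<n}"
  define C where "C = mat n n (\<lambda>(i,j). if i = j then X else if {i,j} \<in> E then -1 else (0::int poly))"
  define g where "g = (\<lambda>p. of_int (sign p) * (\<Prod>i=0..<n. C $$ (i, p i)) :: int poly)"
  have finS: "finite S" unfolding S_def by simp
  have rank1S: "\<And>u v. u \<in> S \<Longrightarrow> v \<in> S \<Longrightarrow> u \<noteq> v \<Longrightarrow> {u,v} \<in> E \<Longrightarrow> r u \<noteq> r v"
    using rank1 unfolding S_def by blast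
  have rank2S: "\<And>v a b. v \<in> S \<Longrightarrow> a \<in> S \<Longrightarrow> b \<in> S \<Longrightarrow> a \<noteq> v \<Longrightarrow> b \<noteq> v
        \<Longrightarrow> {v,a} \<in> E \<Longrightarrow> {v,b} \<in> E \<Longrightarrow> r a < r v \<Longrightarrow> r b < r v \<Longrightarrow> a = b"
    using rank2 unfolding S_def by blast
  have Centry: "C $$ (i, j) = (if i = j then X else if {i,j} \<in> E then -1 else 0)" if "i < n" "j < n" for i j
    unfolding C_def using that by simp
  have "det C = sum g {p. p permutes S}" unfolding det_def C_def g_def S_def by simp
  define Good where "Good = {p. p permutes S \<and> (\<forall>i\<in>S. p i \<noteq> i \<longrightarrow> {i, p i} \<in> E)}"
  have "sum g {p. p permutes S} = sum g Good"
  proof (rule sum.mono_neutral_right)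
    show "finite {p. p permutes S}" using finS by (rule finite_permutations)
    show "Good \<subseteq> {p. p permutes S}" unfolding Good_def by auto
    show "\<forall>p\<in>{p. p permutes S} - Good. g p = 0"
    proof
      fix p assume p: "p \<in> {p. p permutes S} - Good"
      then obtain i where i: "i \<in> S" "p i \<noteq> i" "{i, p i} \<notin> E" unfolding Good_def by auto
      have "p i \<in> S" using p i(1) by (simp add: permutes_in_image)
      then have "C $$ (i, p i) = 0" using Centry i unfolding S_def by simp
      then have "(\<Prod>i=0..<n. C $$ (i, p i)) = 0" using i(1) unfolding S_def by (intro prod_zero) auto
      then show "g p = 0" unfolding g_def by simp
    qed
  qed
  have GoodIm: "Good = swapM ` matchings S E"
  proof
    show "swapM ` matchings S E \<subseteq> Good"
    proof
      fix p assume "p \<in> swapM ` matchings S E"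
      then obtain M where M: "M \<in> matchings S E" "p = swapM M" by blast
      have mM: "is_matching M" using M(1) by (rule matchings_is_matching)
      have US: "\<Union>M \<subseteq> S" and ME: "M \<subseteq> E" using M(1) unfolding matchings_def by auto
      have "p permutes S" using swapM_permutes[OF mM US] M(2) by simp
      moreover have "{i, p i} \<in> E" if "i \<in> S" "p i \<noteq> i" for i
      proof -
        have "i \<in> \<Union>M" using that(2) M(2) swapM_out by metis
        then obtain e where e: "e \<in> M" "i \<in> e" by blast
        then show ?thesis using swapM_in(2)[OF mM e] M(2) ME by auto
      qed
      ultimately show "p \<in> Good" unfolding Good_def by auto
    qed
  next
    show "Good \<subseteq> swapM ` matchings S E"
    proof
      fix p assume p: "p \<in> Good"
      have perm: "p permutes S" and good: "\<And>i. i \<in> S \<Longrightarrow> p i \<noteq> i \<Longrightarrow> {i, p i} \<in> E"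
        using p unfolding Good_def by auto
      have inv: "p (p x) = x" for x
        by (rule forest_invol[OF finS perm good rank1S rank2S])
      have injp: "inj p" using perm permutes_inj by blast
      have pS: "p i \<in> S" if "i \<in> S" for i using perm that by (simp add: permutes_in_image)
      define Mp where "Mp = {{i, p i} | i. i \<in> S \<and> p i \<noteq> i}"
      have disj: "e \<inter> f = {}" if ef: "e \<in> Mp" "f \<in> Mp" "e \<noteq> f" for e f
      proof -
        obtain i where i: "e = {i, p i}" using ef(1) unfolding Mp_def by blast
        obtain j where j: "f = {j, p j}" using ef(2) unfolding Mp_def by blast
        have "i \<noteq> j" using i j ef(3) by auto
        moreover have "i \<noteq> p j" using i j ef(3) inv[of j] by (metis insert_commute)
        moreover have "p i \<noteq> j" using i j ef(3) inv[of i] by (metis insert_commute)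
        moreover have "p i \<noteq> p j" using \<open>i \<noteq> j\<close> injp by (meson injD)
        ultimately show ?thesis using i j by auto
      qed
      have MpM: "Mp \<in> matchings S E"
        unfolding matchings_def
      proof (intro CollectI conjI)
        show "Mp \<subseteq> {e \<in> E. e \<subseteq> S \<and> card e = 2}"
        proof
          fix e assume "e \<in> Mp"
          then obtain i where i: "e = {i, p i}" "i \<in> S" "p i \<noteq> i" unfolding Mp_def by blast
          then show "e \<in> {e \<in> E. e \<subseteq> S \<and> card e = 2}" using good pS by auto
        qed
        show "\<forall>e\<in>Mp. \<forall>f\<in>Mp. e \<noteq> f \<longrightarrow> e \<inter> f = {}" using disj by blast
      qed
      have mMp: "is_matching Mp" using MpM by (rule matchings_is_matching)
      have "swapM Mp = p"
      proof
        fix x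
        show "swapM Mp x = p x"
        proof (cases "p x = x")
          case False
          have xS: "x \<in> S" using False perm by (metis permutes_not_in)
          have "{x, p x} \<in> Mp" unfolding Mp_def using xS False by blast
          then show ?thesis using swapM_edge[OF mMp _ False[symmetric]] by simp
        next
          case True
          have "x \<notin> \<Union>Mp"
          proof
            assume "x \<in> \<Union>Mp"
            then obtain i where i: "x \<in> {i, p i}" "p i \<noteq> i" unfolding Mp_def by blast
            then show False using True inv[of i] by auto
          qed
          then show ?thesis using True swapM_out by metis
        qed
      qed
      then show "p \<in> swapM ` matchings S E" using MpM by blast
    qed
  qed
  have "sum g Good = sum (g \<circ> swapM) (matchings S E)"
    unfolding GoodIm by (rule sum.reindex[OF swapM_inj])
  also have "\<dots> = (\<Sum>M\<in>matchings S E. (-1)^card M * X^(card S - 2 * card M))"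
  proof (rule sum.cong[OF refl])
    fix M assume M: "M \<in> matchings S E"
    have mM: "is_matching M" using M by (rule matchings_is_matching)
    have US: "\<Union>M \<subseteq> S" and ME: "M \<subseteq> E" using M unfolding matchings_def by auto
    have fM: "finite M" and cU: "2 * card M = card (\<Union>M)" using matching_card[OF finS M] by auto
    have sg: "sign (swapM M) = (-1) ^ card M" using swapM_sign[OF fM mM] by simp
    have ent: "C $$ (i, swapM M i) = (if i \<in> \<Union>M then -1 else X)" if "i \<in> S" for i
    proof (cases "i \<in> \<Union>M")
      case True
      then obtain e where e: "e \<in> M" "i \<in> e" by blast
      have s: "swapM M i \<noteq> i" "e = {i, swapM M i}" using swapM_in[OF mM e] by auto
      have "swapM M i \<in> S" using s e US by blast
      then show ?thesis using Centry that s e ME True unfolding S_def by auto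
    next
      case False
      then show ?thesis using Centry that swapM_out[OF False] unfolding S_def by auto
    qed
    have "(\<Prod>i=0..<n. C $$ (i, swapM M i)) = (\<Prod>i\<in>S. (if i \<in> \<Union>M then -1 else X))"
      unfolding S_def using ent unfolding S_def by (intro prod.cong) auto
    also have "\<dots> = (\<Prod>i\<in>S \<inter> {i. i \<in> \<Union>M}. -1) * (\<Prod>i\<in>S \<inter> - {i. i \<in> \<Union>M}. X)"
      by (rule prod.If_cases[OF finS])
    also have "S \<inter> {i. i \<in> \<Union>M} = \<Union>M" using US by auto
    also have "S \<inter> - {i. i \<in> \<Union>M} = S - \<Union>M" by auto
    also have "(\<Prod>i\<in>\<Union>M. (-1::int poly)) * (\<Prod>i\<in>S - \<Union>M. X) = (-1)^card (\<Union>M) * X^card (S - \<Union>M)"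
      by simp
    also have "card (S - \<Union>M) = card S - 2 * card M"
      using cU card_Diff_subset[OF finite_subset[OF US finS] US] by simp
    also have "(-1::int poly)^card (\<Union>M) = 1" using cU[symmetric] by (simp add: power_mult)
    finally have pr: "(\<Prod>i=0..<n. C $$ (i, swapM M i)) = X^(card S - 2 * card M)" by simp
    show "(g \<circ> swapM) M = (-1)^card M * X^(card S - 2 * card M)"
      unfolding g_def comp_def pr sg by simp
  qed
  also have "\<dots> = Mt S E" unfolding Mt_def ..
  finally show ?thesis using \<open>det C = sum g {p. p permutes S}\<close> \<open>sum g {p. p permutes S} = sum g Good\<close>
    unfolding C_def S_def by simp
qed

lemma char_poly_graph_Mt:
  fixes G :: "'a graph" and r :: "'a \<Rightarrow> nat"
  assumes fin: "finite (verts G)" and c2: "\<And>e. e \<in> edges G \<Longrightarrow> card e = 2"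
    and rank1: "\<And>u v. u \<in> verts G \<Longrightarrow> v \<in> verts G \<Longrightarrow> u \<noteq> v \<Longrightarrow> {u,v} \<in> edges G \<Longrightarrow> r u \<noteq> r v"
    and rank2: "\<And>v a b. v \<in> verts G \<Longrightarrow> a \<in> verts G \<Longrightarrow> b \<in> verts G \<Longrightarrow> a \<noteq> v \<Longrightarrow> b \<noteq> v
        \<Longrightarrow> {v,a} \<in> edges G \<Longrightarrow> {v,b} \<in> edges G \<Longrightarrow> r a < r v \<Longrightarrow> r b < r v \<Longrightarrow> a = b"
  shows "char_poly_graph G = Mt (verts G) (edges G)"
proof -
  have ex: "\<exists>vs. distinct vs \<and> set vs = verts G" using finite_distinct_list[OF fin] by metis
  define vs where "vs = vertex_list G"
  have vs: "distinct vs" "set vs = verts G"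
    using someI_ex[OF ex] unfolding vs_def vertex_list_def by auto
  define n where "n = length vs"
  define E' where "E' = {e. (nth vs) ` e \<in> edges G}"
  have A: "adj_matrix G = mat n n (\<lambda>(i,j). if {vs!i, vs!j} \<in> edges G then 1 else 0)"
    unfolding adj_matrix_def vs_def n_def Let_def by simp
  have nE: "{vs!i, vs!i} \<notin> edges G" for i using c2[of "{vs!i, vs!i}"] by auto
  have CP: "char_poly_matrix (adj_matrix G) = mat n n (\<lambda>(i,j). if i = j then X else if {i,j} \<in> E' then -1 else 0)"
  proof (rule eq_matI)
    fix i j assume ij: "i < dim_row (mat n n (\<lambda>(i,j). if i = j then X else if {i,j} \<in> E' then -1 else (0::int poly)))"
        "j < dim_col (mat n n (\<lambda>(i,j). if i = j then X else if {i,j} \<in> E' then -1 else (0::int poly)))"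
    then have ij': "i < n" "j < n" by auto
    have im: "{i,j} \<in> E' \<longleftrightarrow> {vs!i, vs!j} \<in> edges G" unfolding E'_def by simp
    show "char_poly_matrix (adj_matrix G) $$ (i, j) =
      mat n n (\<lambda>(i,j). if i = j then X else if {i,j} \<in> E' then -1 else 0) $$ (i, j)"
      unfolding char_poly_matrix_def A using ij' nE im by (auto simp: one_pCons)
  qed (auto simp: char_poly_matrix_def A)
  have "char_poly_graph G = det (mat n n (\<lambda>(i,j). if i = j then X else if {i,j} \<in> E' then -1 else 0))"
    unfolding char_poly_graph_def char_poly_def CP ..
  also have "\<dots> = Mt {0..<n} E'"
  proof (rule det_forest[where r = "\<lambda>i. r (vs!i)"])
    fix u v assume uv: "u \<in> {0..<n}" "v \<in> {0..<n}" "u \<noteq> v" "{u,v} \<in> E'"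
    have "vs!u \<noteq> vs!v" using uv vs(1) unfolding n_def by (simp add: nth_eq_iff_index_eq)
    moreover have "vs!u \<in> set vs" "vs!v \<in> set vs" using uv unfolding n_def by simp_all
    then have "vs!u \<in> verts G" "vs!v \<in> verts G" using vs(2) by simp_all
    moreover have "{vs!u, vs!v} \<in> edges G" using uv(4) unfolding E'_def by simp
    ultimately show "r (vs!u) \<noteq> r (vs!v)" using rank1 by blast
  next
    fix v a b assume h: "v \<in> {0..<n}" "a \<in> {0..<n}" "b \<in> {0..<n}" "a \<noteq> v" "b \<noteq> v"
      "{v,a} \<in> E'" "{v,b} \<in> E'" "r (vs!a) < r (vs!v)" "r (vs!b) < r (vs!v)"
    have "vs!a \<noteq> vs!v" "vs!b \<noteq> vs!v" using h vs(1) unfolding n_def by (simp_all add: nth_eq_iff_index_eq)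
    moreover have "vs!v \<in> set vs" "vs!a \<in> set vs" "vs!b \<in> set vs" using h unfolding n_def by simp_all
    then have "vs!v \<in> verts G" "vs!a \<in> verts G" "vs!b \<in> verts G" using vs(2) by simp_all
    moreover have "{vs!v, vs!a} \<in> edges G" "{vs!v, vs!b} \<in> edges G" using h(6,7) unfolding E'_def by simp_all
    ultimately have "vs!a = vs!b" using rank2 h(8,9) by blast
    then show "a = b" using h vs(1) unfolding n_def by (simp add: nth_eq_iff_index_eq)
  qed
  also have "\<dots> = Mt ((nth vs) ` {0..<n}) (edges G)"
  proof (rule Mt_iso[symmetric])
    show "inj_on (nth vs) {0..<n}" using inj_on_nth[OF vs(1)] unfolding n_def by simp
    show "finite {0..<n}" by simp
    show "(nth vs ` e \<in> edges G) = (e \<in> E')" for e unfolding E'_def by simp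
  qed
  also have "(nth vs) ` {0..<n} = set (map (nth vs) [0..<n])" by simp
  also have "\<dots> = verts G" using vs(2) unfolding n_def by (simp add: map_nth)
  finally show ?thesis .
qed

lemma neg_one_pow_poly: "(-1::int poly)^k = [:(-1)^k:]"
  by (induction k) (auto simp: mult_to_poly)

lemma monom_aux: "of_nat N * ((-1::int poly)^k * X^d) = monom ((-1) ^ k * int N) d"
  by (simp add: monom_altdef of_nat_poly neg_one_pow_poly mult.commute)

lemma matching_poly_Mt:
  fixes G :: "'a graph"
  assumes fin: "finite (verts G)" and c2: "\<And>e. e \<in> edges G \<Longrightarrow> card e = 2 \<and> e \<subseteq> verts G"
  shows "matching_poly G = Mt (verts G) (edges G)"
proof -
  define V where "V = verts G"
  define E where "E = edges G"
  have EE: "{e\<in>edges G. e \<subseteq> V \<and> card e = 2} = edges G" using c2 unfolding V_def by auto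
  have nm: "num_matchings G k = card {M \<in> matchings V E. card M = k}" for k
  proof -
    have "{M. M \<subseteq> edges G \<and> card M = k \<and> (\<forall>e\<in>M. \<forall>f\<in>M. e \<noteq> f \<longrightarrow> e \<inter> f = {})}
        = {M \<in> matchings V E. card M = k}"
      unfolding matchings_def E_def EE by auto
    then show ?thesis unfolding num_matchings_def by simp
  qed
  define t where "t = (\<lambda>M::'a set set. (-1::int poly)^card M * X^(card V - 2*card M))"
  have "Mt V E = (\<Sum>k\<in>{..card V div 2}. sum t {M \<in> matchings V E. card M = k})"
    unfolding Mt_def t_def
  proof (rule sum.group[symmetric])
    show "finite (matchings V E)" using fin finite_matchings unfolding V_def by blast
    show "card ` matchings V E \<subseteq> {..card V div 2}"
    proof
      fix c assume "c \<in> card ` matchings V E"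
      then obtain M where M: "M \<in> matchings V E" "c = card M" by blast
      have "2 * card M \<le> card V" using matching_card(3)[OF _ M(1)] fin unfolding V_def by simp
      then show "c \<in> {..card V div 2}" using M(2) by simp
    qed
  qed simp
  also have "\<dots> = matching_poly G"
    unfolding matching_poly_def V_def[symmetric]
  proof (rule sum.cong[OF refl])
    fix k assume "k \<in> {..card V div 2}"
    have "sum t {M \<in> matchings V E. card M = k} = sum (\<lambda>_. (-1)^k * X^(card V - 2*k)) {M \<in> matchings V E. card M = k}"
      unfolding t_def by (rule sum.cong) simp_all
    also have "\<dots> = of_nat (num_matchings G k) * ((-1)^k * X^(card V - 2*k))"
      unfolding nm by simp
    also have "\<dots> = monom ((-1) ^ k * int (num_matchings G k)) (card V - 2 * k)"
      by (rule monom_aux)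
    finally show "sum t {M \<in> matchings V E. card M = k} = monom ((-1) ^ k * int (num_matchings G k)) (card V - 2 * k)" .
  qed
  finally show ?thesis unfolding V_def E_def ..
qed

definition good_graph :: "'a graph \<Rightarrow> ('a \<Rightarrow> nat) \<Rightarrow> bool" where
 "good_graph G r \<longleftrightarrow> finite (verts G) \<and> (\<forall>e\<in>edges G. card e = 2 \<and> e \<subseteq> verts G) \<and>
   (\<forall>u\<in>verts G. \<forall>v\<in>verts G. u \<noteq> v \<longrightarrow> {u,v} \<in> edges G \<longrightarrow> r u \<noteq> r v) \<and>
   (\<forall>v\<in>verts G. \<forall>a\<in>verts G. \<forall>b\<in>verts G. a \<noteq> v \<longrightarrow> b \<noteq> v \<longrightarrow> {v,a} \<in> edges G \<longrightarrow> {v,b} \<in> edges G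
      \<longrightarrow> r a < r v \<longrightarrow> r b < r v \<longrightarrow> a = b)"

lemma good_parts:
  assumes "good_graph G r"
  shows "finite (verts G)" "\<And>e. e \<in> edges G \<Longrightarrow> card e = 2" "\<And>e. e \<in> edges G \<Longrightarrow> e \<subseteq> verts G"
    "\<And>u v. u \<in> verts G \<Longrightarrow> v \<in> verts G \<Longrightarrow> u \<noteq> v \<Longrightarrow> {u,v} \<in> edges G \<Longrightarrow> r u \<noteq> r v"
    "\<And>v a b. v \<in> verts G \<Longrightarrow> a \<in> verts G \<Longrightarrow> b \<in> verts G \<Longrightarrow> a \<noteq> v \<Longrightarrow> b \<noteq> v
        \<Longrightarrow> {v,a} \<in> edges G \<Longrightarrow> {v,b} \<in> edges G \<Longrightarrow> r a < r v \<Longrightarrow> r b < r v \<Longrightarrow> a = b"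
proof -
  note h = assms[unfolded good_graph_def]
  show "finite (verts G)" using h by (rule conjunct1)
  have h2: "\<forall>e\<in>edges G. card e = 2 \<and> e \<subseteq> verts G" using h[THEN conjunct2, THEN conjunct1] .
  show "\<And>e. e \<in> edges G \<Longrightarrow> card e = 2" using h2 by simp
  show "\<And>e. e \<in> edges G \<Longrightarrow> e \<subseteq> verts G" using h2 by simp
  have h3: "\<forall>u\<in>verts G. \<forall>v\<in>verts G. u \<noteq> v \<longrightarrow> {u,v} \<in> edges G \<longrightarrow> r u \<noteq> r v"
    using h[THEN conjunct2, THEN conjunct2, THEN conjunct1] .
  show "r u \<noteq> r v" if "u \<in> verts G" "v \<in> verts G" "u \<noteq> v" "{u,v} \<in> edges G" for u v
    using h3 that by blast
  have h4: "\<forall>v\<in>verts G. \<forall>a\<in>verts G. \<forall>b\<in>verts G. a \<noteq> v \<longrightarrow> b \<noteq> v \<longrightarrow> {v,a} \<in> edges G \<longrightarrow> {v,b} \<in> edges G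
      \<longrightarrow> r a < r v \<longrightarrow> r b < r v \<longrightarrow> a = b" using h[THEN conjunct2, THEN conjunct2, THEN conjunct2] .
  show "a = b" if "v \<in> verts G" "a \<in> verts G" "b \<in> verts G" "a \<noteq> v" "b \<noteq> v"
        "{v,a} \<in> edges G" "{v,b} \<in> edges G" "r a < r v" "r b < r v" for v a b
    using h4 that by blast
qed

lemma good_char_poly: "good_graph G r \<Longrightarrow> char_poly_graph G = Mt (verts G) (edges G)"
  by (rule char_poly_graph_Mt[OF good_parts(1,2,4,5)])

lemma good_matching_poly: assumes "good_graph G r" shows "matching_poly G = Mt (verts G) (edges G)"
  by (rule matching_poly_Mt[OF good_parts(1)[OF assms]]) (simp add: good_parts(2,3)[OF assms])

lemma Inl_pair: "{x, y} = Inl ` e \<Longrightarrow> \<exists>a b. x = Inl a \<and> y = Inl b \<and> e = {a,b}"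
proof -
  assume h: "{x, y} = Inl ` e"
  then obtain a b where ab: "x = Inl a" "y = Inl b" "a \<in> e" "b \<in> e" by (metis imageE insertI1 insertI2 singletonI) 
  have "e = {a,b}"
  proof
    show "e \<subseteq> {a,b}"
    proof
      fix c assume "c \<in> e"
      then have "Inl c \<in> {x,y}" using h by blast
      then show "c \<in> {a,b}" using ab by auto
    qed
    show "{a,b} \<subseteq> e" using ab by auto
  qed
  then show ?thesis using ab by blast
qed

lemma Inr_pair: "{x, y} = Inr ` e \<Longrightarrow> \<exists>a b. x = Inr a \<and> y = Inr b \<and> e = {a,b}"
proof -
  assume h: "{x, y} = Inr ` e"
  then obtain a b where ab: "x = Inr a" "y = Inr b" "a \<in> e" "b \<in> e" by (metis imageE insertI1 insertI2 singletonI) 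
  have "e = {a,b}"
  proof
    show "e \<subseteq> {a,b}"
    proof
      fix c assume "c \<in> e"
      then have "Inr c \<in> {x,y}" using h by blast
      then show "c \<in> {a,b}" using ab by auto
    qed
    show "{a,b} \<subseteq> e" using ab by auto
  qed
  then show ?thesis using ab by blast
qed

lemma du_edge:
  assumes "{x,y} \<in> edges (disj_union G H)"
  shows "(\<exists>a b. x = Inl a \<and> y = Inl b \<and> {a,b} \<in> edges G) \<or> (\<exists>a b. x = Inr a \<and> y = Inr b \<and> {a,b} \<in> edges H)"
proof -
  have "{x,y} \<in> (\<lambda>e. Inl ` e) ` edges G \<or> {x,y} \<in> (\<lambda>e. Inr ` e) ` edges H"
    using assms unfolding disj_union_def edges_def by simp
  then show ?thesis
  proof
    assume "{x,y} \<in> (\<lambda>e. Inl ` e) ` edges G"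
    then obtain e where e: "e \<in> edges G" "{x,y} = Inl ` e" by blast
    then show ?thesis using Inl_pair[OF e(2)] by blast
  next
    assume "{x,y} \<in> (\<lambda>e. Inr ` e) ` edges H"
    then obtain e where e: "e \<in> edges H" "{x,y} = Inr ` e" by blast
    then show ?thesis using Inr_pair[OF e(2)] by blast
  qed
qed

lemma du_verts: "verts (disj_union G H) = Inl ` verts G \<union> Inr ` verts H"
  unfolding disj_union_def verts_def by simp

lemma du_edges: "edges (disj_union G H) = (\<lambda>e. Inl ` e) ` edges G \<union> (\<lambda>e. Inr ` e) ` edges H"
  unfolding disj_union_def edges_def by simp

lemma du_good:
  assumes g: "good_graph G rG" and h: "good_graph H rH"
  shows "good_graph (disj_union G H) (case_sum rG rH)"
proof -
  have gG: "finite (verts G)" "\<forall>e\<in>edges G. card e = 2 \<and> e \<subseteq> verts G"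
    "\<forall>u\<in>verts G. \<forall>v\<in>verts G. u \<noteq> v \<longrightarrow> {u,v} \<in> edges G \<longrightarrow> rG u \<noteq> rG v"
    "\<forall>v\<in>verts G. \<forall>a\<in>verts G. \<forall>b\<in>verts G. a \<noteq> v \<longrightarrow> b \<noteq> v \<longrightarrow> {v,a} \<in> edges G \<longrightarrow> {v,b} \<in> edges G
      \<longrightarrow> rG a < rG v \<longrightarrow> rG b < rG v \<longrightarrow> a = b" using g unfolding good_graph_def by blast+
  have hH: "finite (verts H)" "\<forall>e\<in>edges H. card e = 2 \<and> e \<subseteq> verts H"
    "\<forall>u\<in>verts H. \<forall>v\<in>verts H. u \<noteq> v \<longrightarrow> {u,v} \<in> edges H \<longrightarrow> rH u \<noteq> rH v"
    "\<forall>v\<in>verts H. \<forall>a\<in>verts H. \<forall>b\<in>verts H. a \<noteq> v \<longrightarrow> b \<noteq> v \<longrightarrow> {v,a} \<in> edges H \<longrightarrow> {v,b} \<in> edges H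
      \<longrightarrow> rH a < rH v \<longrightarrow> rH b < rH v \<longrightarrow> a = b" using h unfolding good_graph_def by blast+
  let ?D = "disj_union G H"
  let ?r = "case_sum rG rH"
  have f: "finite (verts ?D)" unfolding du_verts using gG(1) hH(1) by simp
  have c: "\<forall>e\<in>edges ?D. card e = 2 \<and> e \<subseteq> verts ?D"
  proof
    fix e assume "e \<in> edges ?D"
    then have "e \<in> (\<lambda>e. Inl ` e) ` edges G \<or> e \<in> (\<lambda>e. Inr ` e) ` edges H" unfolding du_edges by simp
    then show "card e = 2 \<and> e \<subseteq> verts ?D"
    proof
      assume "e \<in> (\<lambda>e. Inl ` e) ` edges G"
      then obtain e' where e': "e' \<in> edges G" "e = Inl ` e'" by blast
      then show ?thesis using gG(2) unfolding du_verts by (auto simp: card_image)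
    next
      assume "e \<in> (\<lambda>e. Inr ` e) ` edges H"
      then obtain e' where e': "e' \<in> edges H" "e = Inr ` e'" by blast
      then show ?thesis using hH(2) unfolding du_verts by (auto simp: card_image)
    qed
  qed
  have vinl: "Inl a \<in> verts ?D \<Longrightarrow> a \<in> verts G" for a unfolding du_verts by auto
  have vinr: "Inr a \<in> verts ?D \<Longrightarrow> a \<in> verts H" for a unfolding du_verts by auto
  have r1: "\<forall>u\<in>verts ?D. \<forall>v\<in>verts ?D. u \<noteq> v \<longrightarrow> {u,v} \<in> edges ?D \<longrightarrow> ?r u \<noteq> ?r v"
  proof (intro ballI impI)
    fix u v assume uv: "u \<in> verts ?D" "v \<in> verts ?D" "u \<noteq> v" "{u,v} \<in> edges ?D"
    from du_edge[OF uv(4)] show "?r u \<noteq> ?r v"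
    proof
      assume "\<exists>a b. u = Inl a \<and> v = Inl b \<and> {a,b} \<in> edges G"
      then obtain a b where ab: "u = Inl a" "v = Inl b" "{a,b} \<in> edges G" by blast
      have "a \<in> verts G" "b \<in> verts G" using vinl uv(1,2) ab(1,2) by auto
      moreover have "a \<noteq> b" using uv(3) ab by auto
      ultimately have "rG a \<noteq> rG b" using gG(3)[rule_format, of a b] ab(3) by blast
      then show ?thesis using ab by simp
    next
      assume "\<exists>a b. u = Inr a \<and> v = Inr b \<and> {a,b} \<in> edges H"
      then obtain a b where ab: "u = Inr a" "v = Inr b" "{a,b} \<in> edges H" by blast
      have "a \<in> verts H" "b \<in> verts H" using vinr uv(1,2) ab(1,2) by auto
      moreover have "a \<noteq> b" using uv(3) ab by auto
      ultimately have "rH a \<noteq> rH b" using hH(3)[rule_format, of a b] ab(3) by blast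
      then show ?thesis using ab by simp
    qed
  qed
  have r2: "\<forall>v\<in>verts ?D. \<forall>a\<in>verts ?D. \<forall>b\<in>verts ?D. a \<noteq> v \<longrightarrow> b \<noteq> v \<longrightarrow> {v,a} \<in> edges ?D \<longrightarrow> {v,b} \<in> edges ?D
      \<longrightarrow> ?r a < ?r v \<longrightarrow> ?r b < ?r v \<longrightarrow> a = b"
  proof (intro ballI impI)
    fix v a b assume h1: "v \<in> verts ?D" "a \<in> verts ?D" "b \<in> verts ?D" "a \<noteq> v" "b \<noteq> v"
      "{v,a} \<in> edges ?D" "{v,b} \<in> edges ?D" "?r a < ?r v" "?r b < ?r v"
    show "a = b"
    proof (cases v)
      case (Inl v')
      obtain a' where a': "a = Inl a'" "{v',a'} \<in> edges G" using du_edge[OF h1(6)] Inl by blast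
      obtain b' where b': "b = Inl b'" "{v',b'} \<in> edges G" using du_edge[OF h1(7)] Inl by blast
      have "v' \<in> verts G" "a' \<in> verts G" "b' \<in> verts G" using vinl h1(1-3) Inl a'(1) b'(1) by auto
      moreover have "a' \<noteq> v'" "b' \<noteq> v'" using h1(4,5) Inl a'(1) b'(1) by auto
      moreover have "rG a' < rG v'" "rG b' < rG v'" using h1(8,9) Inl a'(1) b'(1) by auto
      ultimately have "a' = b'" using gG(4)[rule_format, of v' a' b'] a'(2) b'(2) by blast
      then show ?thesis using a' b' by simp
    next
      case (Inr v')
      obtain a' where a': "a = Inr a'" "{v',a'} \<in> edges H" using du_edge[OF h1(6)] Inr by blast
      obtain b' where b': "b = Inr b'" "{v',b'} \<in> edges H" using du_edge[OF h1(7)] Inr by blast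
      have "v' \<in> verts H" "a' \<in> verts H" "b' \<in> verts H" using vinr h1(1-3) Inr a'(1) b'(1) by auto
      moreover have "a' \<noteq> v'" "b' \<noteq> v'" using h1(4,5) Inr a'(1) b'(1) by auto
      moreover have "rH a' < rH v'" "rH b' < rH v'" using h1(8,9) Inr a'(1) b'(1) by auto
      ultimately have "a' = b'" using hH(4)[rule_format, of v' a' b'] a'(2) b'(2) by blast
      then show ?thesis using a' b' by simp
    qed
  qed
  show ?thesis unfolding good_graph_def using f c r1 r2 by blast
qed

lemma du_Mt:
  assumes g: "good_graph G rG" and h: "good_graph H rH"
  shows "Mt (verts (disj_union G H)) (edges (disj_union G H)) = Mt (verts G) (edges G) * Mt (verts H) (edges H)"
proof -
  have gG: "finite (verts G)" "\<forall>e\<in>edges G. card e = 2 \<and> e \<subseteq> verts G" using g unfolding good_graph_def by blast+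
  have hH: "finite (verts H)" "\<forall>e\<in>edges H. card e = 2 \<and> e \<subseteq> verts H" using h unfolding good_graph_def by blast+
  let ?E = "edges (disj_union G H)"
  have "Mt (verts (disj_union G H)) ?E = Mt (Inl ` verts G) ?E * Mt (Inr ` verts H) ?E"
    unfolding du_verts
  proof (rule Mt_union)
    show "finite (Inl ` verts G)" "finite (Inr ` verts H)" using gG(1) hH(1) by auto
    show "Inl ` verts G \<inter> Inr ` verts H = {}" by auto
    fix e assume e: "e \<in> ?E" "e \<subseteq> Inl ` verts G \<union> Inr ` verts H" "card e = 2"
    then have "e \<in> (\<lambda>e. Inl ` e) ` edges G \<or> e \<in> (\<lambda>e. Inr ` e) ` edges H" unfolding du_edges by simp
    then show "e \<subseteq> Inl ` verts G \<or> e \<subseteq> Inr ` verts H" using gG(2) hH(2) by blast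
  qed
  also have "Mt (Inl ` verts G) ?E = Mt (verts G) (edges G)"
  proof (rule Mt_iso)
    show "inj_on Inl (verts G)" by simp
    show "finite (verts G)" by (rule gG(1))
    fix e assume e: "e \<subseteq> verts G" "card e = 2"
    have ne: "e \<noteq> {}" using e(2) by auto
    have "Inl ` e \<notin> (\<lambda>e. Inr ` e) ` edges H" using ne by auto
    moreover have "Inl ` e \<in> (\<lambda>e. Inl ` e) ` edges G \<longleftrightarrow> e \<in> edges G"
      by (auto simp: inj_image_eq_iff[of Inl])
    ultimately show "(Inl ` e \<in> ?E) = (e \<in> edges G)" unfolding du_edges by blast
  qed
  also have "Mt (Inr ` verts H) ?E = Mt (verts H) (edges H)"
  proof (rule Mt_iso)
    show "inj_on Inr (verts H)" by simp
    show "finite (verts H)" by (rule hH(1))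
    fix e assume e: "e \<subseteq> verts H" "card e = 2"
    have ne: "e \<noteq> {}" using e(2) by auto
    have "Inr ` e \<notin> (\<lambda>e. Inl ` e) ` edges G" using ne by auto
    moreover have "Inr ` e \<in> (\<lambda>e. Inr ` e) ` edges H \<longleftrightarrow> e \<in> edges H"
      by (auto simp: inj_image_eq_iff[of Inr])
    ultimately show "(Inr ` e \<in> ?E) = (e \<in> edges H)" unfolding du_edges by blast
  qed
  finally show ?thesis .
qed

definition rW :: "nat \<Rightarrow> nat \<Rightarrow> nat" where
  "rW k x = (if x = k+5 then 3 else if x = k+6 then k+4 else x)"


lemma path_good: "good_graph (path_graph t) (\<lambda>x. x)"
proof -
  have V: "verts (path_graph t) = {1..t+1}" unfolding verts_def path_graph_def by simp
  have E: "edges (path_graph t) = {{i, i+1} | i. 1 \<le> i \<and> i \<le> t}" unfolding edges_def path_graph_def by simp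
  have low: "a = v - 1" if "{v,a} \<in> edges (path_graph t)" "a < v" for v a
  proof -
    have "\<exists>i. {v,a} = {i, i+1} \<and> 1 \<le> i \<and> i \<le> t" using that(1) unfolding E by (simp only: mem_Collect_eq)
    then obtain i where i: "{v,a} = {i, i+1}" by blast
    then have "(v = i \<and> a = i+1) \<or> (v = i+1 \<and> a = i)" by (simp add: doubleton_eq_iff)
    then show ?thesis using that(2) by (elim disjE) simp_all
  qed
  have c: "\<forall>e\<in>edges (path_graph t). card e = 2 \<and> e \<subseteq> verts (path_graph t)"
  proof
    fix e assume "e \<in> edges (path_graph t)"
    then have "\<exists>i. e = {i, i+1} \<and> 1 \<le> i \<and> i \<le> t" unfolding E by (simp only: mem_Collect_eq)
    then obtain i where i: "e = {i, i+1}" "1 \<le> i" "i \<le> t" by blast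
    then show "card e = 2 \<and> e \<subseteq> verts (path_graph t)" unfolding V by auto
  qed
  show ?thesis unfolding good_graph_def
  proof (intro conjI)
    show "finite (verts (path_graph t))" unfolding V by simp
    show "\<forall>e\<in>edges (path_graph t). card e = 2 \<and> e \<subseteq> verts (path_graph t)" by (rule c)
    show "\<forall>u\<in>verts (path_graph t). \<forall>v\<in>verts (path_graph t). u \<noteq> v \<longrightarrow> {u,v} \<in> edges (path_graph t) \<longrightarrow> u \<noteq> v"
      by simp
    show "\<forall>v\<in>verts (path_graph t). \<forall>a\<in>verts (path_graph t). \<forall>b\<in>verts (path_graph t). a \<noteq> v \<longrightarrow> b \<noteq> v \<longrightarrow>
      {v,a} \<in> edges (path_graph t) \<longrightarrow> {v,b} \<in> edges (path_graph t) \<longrightarrow> a < v \<longrightarrow> b < v \<longrightarrow> a = b"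
    proof (intro ballI impI)
      fix v a b assume h: "{v,a} \<in> edges (path_graph t)" "{v,b} \<in> edges (path_graph t)" "a < v" "b < v"
      show "a = b" using low[OF h(1) h(3)] low[OF h(2) h(4)] by simp
    qed
  qed
qed

lemma W_good:
  assumes N: "N = k + 5"
  shows "good_graph (W_graph N) (rW k)"
proof -
  have V: "verts (W_graph N) = {1..k+6}" unfolding verts_def W_graph_def N by simp
  have E: "edges (W_graph N) = {{i, i+1} | i. 1 \<le> i \<and> i \<le> k+3} \<union> {{2, k+5}, {k+3, k+6}}"
    unfolding edges_def W_graph_def N by (simp add: add.commute)
  have cases: "((\<exists>i. 1 \<le> i \<and> i \<le> k+3 \<and> ((u = i \<and> v = i+1) \<or> (u = i+1 \<and> v = i)))
      \<or> (u = 2 \<and> v = k+5) \<or> (u = k+5 \<and> v = 2) \<or> (u = k+3 \<and> v = k+6) \<or> (u = k+6 \<and> v = k+3))"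
    if "{u,v} \<in> edges (W_graph N)" for u v
  proof -
    have "{u,v} \<in> {{i, i+1} | i. 1 \<le> i \<and> i \<le> k+3} \<or> {u,v} = {2, k+5} \<or> {u,v} = {k+3, k+6}"
      using that unfolding E by blast
    then show ?thesis
    proof (elim disjE)
      assume "{u,v} \<in> {{i, i+1} | i. 1 \<le> i \<and> i \<le> k+3}"
      then obtain i where "{u,v} = {i, i+1}" "1 \<le> i" "i \<le> k+3" by blast
      then show ?thesis by (auto simp: doubleton_eq_iff)
    next
      assume "{u,v} = {2, k+5}" then show ?thesis by (auto simp: doubleton_eq_iff)
    next
      assume "{u,v} = {k+3, k+6}" then show ?thesis by (auto simp: doubleton_eq_iff)
    qed
  qed
  have r1: "rW k u \<noteq> rW k v" if "{u,v} \<in> edges (W_graph N)" for u v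
    using cases[OF that] unfolding rW_def by auto
  have low: "a = (if v = k+5 then 2 else if v = k+6 then k+3 else v - 1)"
    if "{v,a} \<in> edges (W_graph N)" "rW k a < rW k v" for v a
    using cases[OF that(1)] that(2) unfolding rW_def by auto
  have c: "\<forall>e\<in>edges (W_graph N). card e = 2 \<and> e \<subseteq> verts (W_graph N)"
    unfolding E V by auto
  show ?thesis unfolding good_graph_def
  proof (intro conjI)
    show "finite (verts (W_graph N))" unfolding V by simp
    show "\<forall>e\<in>edges (W_graph N). card e = 2 \<and> e \<subseteq> verts (W_graph N)" by (rule c)
    show "\<forall>u\<in>verts (W_graph N). \<forall>v\<in>verts (W_graph N). u \<noteq> v \<longrightarrow> {u,v} \<in> edges (W_graph N) \<longrightarrow> rW k u \<noteq> rW k v"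
      using r1 by blast
    show "\<forall>v\<in>verts (W_graph N). \<forall>a\<in>verts (W_graph N). \<forall>b\<in>verts (W_graph N). a \<noteq> v \<longrightarrow> b \<noteq> v \<longrightarrow>
      {v,a} \<in> edges (W_graph N) \<longrightarrow> {v,b} \<in> edges (W_graph N) \<longrightarrow> rW k a < rW k v \<longrightarrow> rW k b < rW k v \<longrightarrow> a = b"
    proof (intro ballI impI)
      fix v a b assume h: "{v,a} \<in> edges (W_graph N)" "{v,b} \<in> edges (W_graph N)" "rW k a < rW k v" "rW k b < rW k v"
      show "a = b" using low[OF h(1) h(3)] low[OF h(2) h(4)] by simp
    qed
  qed
qed

lemma Mt_G:
  assumes "m \<ge> 6" "n \<ge> 6"
  shows "Mt (verts (disj_union (path_graph (m - 5)) (W_graph (n - 1)))) (edges (disj_union (path_graph (m - 5)) (W_graph (n - 1))))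
     = pp ((m - 6) + 2) * (X^2 * ((X^2 - 4) * pp ((n - 6) + 2)))"
proof -
  have N: "n - 1 = (n - 6) + 5" using assms by simp
  have "Mt (verts (disj_union (path_graph (m - 5)) (W_graph (n - 1)))) (edges (disj_union (path_graph (m - 5)) (W_graph (n - 1))))
     = Mt (verts (path_graph (m - 5))) (edges (path_graph (m - 5))) * Mt (verts (W_graph (n - 1))) (edges (W_graph (n - 1)))"
    by (rule du_Mt[OF path_good W_good[OF N]])
  also have "Mt (verts (path_graph (m - 5))) (edges (path_graph (m - 5))) = pp ((m - 6) + 2)"
  proof -
    have e: "m - 5 + 1 = (m - 6) + 2" using assms by simp
    show ?thesis using Mt_path_graph[of "m - 5"] unfolding e .
  qed
  also have "Mt (verts (W_graph (n - 1))) (edges (W_graph (n - 1))) = X^2 * ((X^2 - 4) * pp ((n - 6) + 2))"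
    by (rule Mt_W_graph[OF N])
  finally show ?thesis .
qed

lemma G_good:
  assumes "n \<ge> 6"
  shows "good_graph (disj_union (path_graph (m - 5)) (W_graph (n - 1))) (case_sum (\<lambda>x. x) (rW (n - 6)))"
proof -
  have N: "n - 1 = (n - 6) + 5" using assms by simp
  show ?thesis by (rule du_good[OF path_good W_good[OF N]])
qed

theorem theorem9:
  fixes m n :: nat
  assumes "m \<ge> 6" and "n \<ge> 6"
  shows "char_poly_graph (disj_union (path_graph (m - 5)) (W_graph (n - 1))) =
           char_poly_graph (disj_union (path_graph (n - 5)) (W_graph (m - 1)))
       \<and> matching_energy (disj_union (path_graph (m - 5)) (W_graph (n - 1))) =
           matching_energy (disj_union (path_graph (n - 5)) (W_graph (m - 1)))"
proof -
  let ?G1 = "disj_union (path_graph (m - 5)) (W_graph (n - 1))"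
  let ?G2 = "disj_union (path_graph (n - 5)) (W_graph (m - 1))"
  have g1: "good_graph ?G1 (case_sum (\<lambda>x. x) (rW (n - 6)))" using G_good assms(2) .
  have g2: "good_graph ?G2 (case_sum (\<lambda>x. x) (rW (m - 6)))" using G_good assms(1) .
  have eq: "Mt (verts ?G1) (edges ?G1) = Mt (verts ?G2) (edges ?G2)"
    unfolding Mt_G[OF assms] Mt_G[OF assms(2,1)] by (simp add: algebra_simps)
  have c: "char_poly_graph ?G1 = char_poly_graph ?G2"
    unfolding good_char_poly[OF g1] good_char_poly[OF g2] eq ..
  have mp: "matching_poly ?G1 = matching_poly ?G2"
    unfolding good_matching_poly[OF g1] good_matching_poly[OF g2] eq ..
  have me: "matching_energy ?G1 = matching_energy ?G2"
    unfolding matching_energy_def mp ..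
  show ?thesis using c me by simp
qed

end
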